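(* Let $(Y,\le)$ be a dcpo and let $X\subset Y$ be a dense lower subset of $Y$ which truncates $Y$. Then $Y$, together with the inclusion $X\hookrightarrow Y$, is the directed completion of $X$ (with the induced order). If moreover every two elements of $X$ have a supremum in $X$, the conclusion still holds under the weaker assumption that $X$ directly truncates $Y$.
   Context: Let $(Y,\le)$ be a partially ordered set. A subset $D\subset Y$ is directed if every finite subset of $D$ (including the empty one) has an upper bound in $D$. $A\subset Y$ is a lower set if $x\in A$ and $y\le x$ imply $y\in A$; $\downarrow A:=\{x:x\le a\text{ for some }a\in A\}$, $\downarrow a:=\downarrow\{a\}$. $(Y,\le)$ is a dcpo if every directed subset has a supremum. A subset $A$ is directed-sup-closed if the supremum of every directed $D\subset A$ which has a supremum belongs to $A$. $\overline A$ is the smallest directed-sup-closed set containing $A$, $\widehat A$ the smallest set containing $A$ that is both a lower set and directed-sup-closed; $A$ is dense if $\overline A=Y$; $A$ has a tip if $\overline A$ has a maximum, denoted ${\sf tip}\,A$. An element $a\in Y$ truncates $Y$ if for every $B\subset Y$ having a tip with $a\le{\sf tip}\,B$ we have $a\in\widehat{(\downarrow B)\cap(\downarrow a)}$; it directly truncates $Y$ if this holds for every directed $B\subset Y$ having a supremum with $a\le\sup B$. A subset $X\subset Y$ (directly) truncates $Y$ if every $a\in X$ does. A map between partially ordered sets has the Monotone Convergence Property (Mcp) if it maps every directed set having a supremum to a set having a supremum, with $T(\sup D)=\sup T(D)$. A directed completion of $(X,\le)$ is a dcpo $(\overline X,\bar\le)$ with a map $\iota:X\to\overline X$ with the Mcp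 such that for every dcpo $Z$ and every map $T:X\to Z$ with the Mcp there is a unique map $\bar T:\overline X\to Z$ with the Mcp satisfying $\bar T\circ\iota=T$. *)

theory Defs
  imports Main
begin

definition directed_in :: "'a::order set \<Rightarrow> 'a set \<Rightarrow> bool" where
  "directed_in A D \<longleftrightarrow> D \<subseteq> A \<and>
     (\<forall>F. finite F \<and> F \<subseteq> D \<longrightarrow> (\<exists>u\<in>D. \<forall>x\<in>F. x \<le> u))"

definition is_sup_in :: "'a::order set \<Rightarrow> 'a set \<Rightarrow> 'a \<Rightarrow> bool" where
  "is_sup_in A D s \<longleftrightarrow> s \<in> A \<and> (\<forall>d\<in>D. d \<le> s) \<and>
     (\<forall>u\<in>A. (\<forall>d\<in>D. d \<le> u) \<longrightarrow> s \<le> u)"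

definition dcpo_on :: "'a::order set \<Rightarrow> bool" where
  "dcpo_on A \<longleftrightarrow> (\<forall>D. directed_in A D \<longrightarrow> (\<exists>s. is_sup_in A D s))"

definition mcp :: "'a::order set \<Rightarrow> 'b::order set \<Rightarrow> ('a \<Rightarrow> 'b) \<Rightarrow> bool" where
  "mcp A B T \<longleftrightarrow> T ` A \<subseteq> B \<and>
     (\<forall>D s. directed_in A D \<and> is_sup_in A D s \<longrightarrow> is_sup_in B (T ` D) (T s))"

text \<open>Directed completion (iota : X -> Yc), universal w.r.t. all dcpos living in type 'z.\<close>
definition directed_completion ::
  "'x::order set \<Rightarrow> 'y::order set \<Rightarrow> ('x \<Rightarrow> 'y) \<Rightarrow> 'z::order itself \<Rightarrow> bool" where
  "directed_completion X Yc \<iota> (_::'z itself) \<longleftrightarrow>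
     dcpo_on Yc \<and> mcp X Yc \<iota> \<and>
     (\<forall>(Zc::'z set) T. dcpo_on Zc \<and> mcp X Zc T \<longrightarrow>
        (\<exists>Tb. mcp Yc Zc Tb \<and> (\<forall>x\<in>X. Tb (\<iota> x) = T x) \<and>
           (\<forall>Tb'. mcp Yc Zc Tb' \<and> (\<forall>x\<in>X. Tb' (\<iota> x) = T x) \<longrightarrow>
              (\<forall>y\<in>Yc. Tb' y = Tb y))))"

text \<open>Notions inside the ambient poset Y = UNIV.\<close>

definition lower_set :: "'a::order set \<Rightarrow> bool" where
  "lower_set A \<longleftrightarrow> (\<forall>x y. x \<in> A \<and> y \<le> x \<longrightarrow> y \<in> A)"

definition down :: "'a::order set \<Rightarrow> 'a set" where
  "down A = {x. \<exists>a\<in>A. x \<le> a}"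

definition dsup_closed :: "'a::order set \<Rightarrow> bool" where
  "dsup_closed A \<longleftrightarrow> (\<forall>D s. directed_in UNIV D \<and> D \<subseteq> A \<and> is_sup_in UNIV D s \<longrightarrow> s \<in> A)"

definition dclosure :: "'a::order set \<Rightarrow> 'a set" where
  "dclosure A = \<Inter>{B. A \<subseteq> B \<and> dsup_closed B}"

definition lclosure :: "'a::order set \<Rightarrow> 'a set" where
  "lclosure A = \<Inter>{B. A \<subseteq> B \<and> lower_set B \<and> dsup_closed B}"

definition dense :: "'a::order set \<Rightarrow> bool" where
  "dense A \<longleftrightarrow> dclosure A = UNIV"

definition is_tip :: "'a::order set \<Rightarrow> 'a \<Rightarrow> bool" where
  "is_tip B m \<longleftrightarrow> m \<in> dclosure B \<and> (\<forall>y\<in>dclosure B. y \<le> m)"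

definition truncates :: "'a::order \<Rightarrow> bool" where
  "truncates a \<longleftrightarrow> (\<forall>B m. is_tip B m \<and> a \<le> m \<longrightarrow> a \<in> lclosure (down B \<inter> down {a}))"

definition directly_truncates :: "'a::order \<Rightarrow> bool" where
  "directly_truncates a \<longleftrightarrow>
     (\<forall>B s. directed_in UNIV B \<and> is_sup_in UNIV B s \<and> a \<le> s \<longrightarrow>
        a \<in> lclosure (down B \<inter> down {a}))"

end

theory Submission
  imports Defs
begin

lemma sup_unique: "is_sup_in A D s \<Longrightarrow> is_sup_in A D t \<Longrightarrow> s = t"
  unfolding is_sup_in_def by (meson order.antisym)

lemma down_single[simp]: "down {y} = {x. x \<le> y}"
  by (auto simp: down_def)

lemma lclosure_sub: "lower_set S \<Longrightarrow> dsup_closed S \<Longrightarrow> A \<subseteq> S \<Longrightarrow> lclosure A \<subseteq> S"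
  unfolding lclosure_def by blast

lemma dclosure_sub: "dsup_closed S \<Longrightarrow> A \<subseteq> S \<Longrightarrow> dclosure A \<subseteq> S"
  unfolding dclosure_def by blast

lemma mcp_mono:
  assumes "mcp X Z T" "x \<in> X" "y \<in> X" "x \<le> y"
  shows "T x \<le> T y"
proof -
  have "directed_in X {x,y}" using assms unfolding directed_in_def by auto
  moreover have "is_sup_in X {x,y} y" using assms unfolding is_sup_in_def by auto
  ultimately have "is_sup_in Z (T ` {x,y}) (T y)" using assms(1) unfolding mcp_def by blast
  then show ?thesis unfolding is_sup_in_def by auto
qed

lemma directed_ne: "directed_in A D \<Longrightarrow> D \<noteq> {}"
  unfolding directed_in_def by blast

locale ctx =
  fixes X :: "'a::order set" and Zc :: "'z::order set" and T :: "'a \<Rightarrow> 'z"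
  assumes dY: "dcpo_on (UNIV :: 'a set)"
    and low: "lower_set X" and den: "dense X"
    and dZ: "dcpo_on Zc" and mT: "mcp X Zc T"
    and H: "\<And>E y x0. directed_in UNIV E \<Longrightarrow> is_sup_in UNIV E y \<Longrightarrow> x0 \<in> X \<Longrightarrow> x0 \<le> y
             \<Longrightarrow> x0 \<in> lclosure (down E \<inter> down {x0})"
begin

definition P :: "'a \<Rightarrow> bool" where "P y \<longleftrightarrow> (\<exists>s. is_sup_in Zc (T ` (X \<inter> {x. x \<le> y})) s)"
definition F :: "'a \<Rightarrow> 'z" where "F y = (SOME s. is_sup_in Zc (T ` (X \<inter> {x. x \<le> y})) s)"

lemma F_sup: "P y \<Longrightarrow> is_sup_in Zc (T ` (X \<inter> {x. x \<le> y})) (F y)"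
  unfolding P_def F_def by (rule someI_ex)

lemma T_in: "x \<in> X \<Longrightarrow> T x \<in> Zc" using mT unfolding mcp_def by auto

lemma lowX: "x \<in> X \<Longrightarrow> z \<le> x \<Longrightarrow> z \<in> X" using low unfolding lower_set_def by blast

lemma F_mono: "P e \<Longrightarrow> P u \<Longrightarrow> e \<le> u \<Longrightarrow> F e \<le> F u"
proof -
  assume a: "P e" "P u" "e \<le> u"
  have "\<forall>d\<in>T ` (X \<inter> {x. x \<le> e}). d \<le> F u"
    using F_sup[OF a(2)] a(3) unfolding is_sup_in_def by (auto intro: order_trans)
  moreover have "F u \<in> Zc" using F_sup[OF a(2)] unfolding is_sup_in_def by auto
  ultimately show ?thesis using F_sup[OF a(1)] unfolding is_sup_in_def by blast
qed

lemma P_X: "x \<in> X \<Longrightarrow> is_sup_in Zc (T ` (X \<inter> {z. z \<le> x})) (T x)"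
  unfolding is_sup_in_def using T_in mcp_mono[OF mT] by auto

lemma step:
  assumes dE: "directed_in UNIV E" and sE: "is_sup_in UNIV E y" and PE: "\<forall>e\<in>E. P e"
  shows "\<exists>M. is_sup_in Zc (F ` E) M \<and> is_sup_in Zc (T ` (X \<inter> {x. x \<le> y})) M"
proof -
  have FZ: "F e \<in> Zc" if "e \<in> E" for e using F_sup[of e] PE that unfolding is_sup_in_def by auto
  have "directed_in Zc (F ` E)"
    unfolding directed_in_def
  proof (intro conjI allI impI)
    show "F ` E \<subseteq> Zc" using FZ by auto
    fix G assume G: "finite G \<and> G \<subseteq> F ` E"
    then obtain G' where G': "G' \<subseteq> E" "finite G'" "G = F ` G'"
      by (meson finite_subset_image)
    then obtain u where u: "u \<in> E" "\<forall>x\<in>G'. x \<le> u" using dE unfolding directed_in_def by blast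
    have "\<forall>x\<in>G. x \<le> F u"
    proof
      fix x assume "x \<in> G"
      then obtain e where e: "e \<in> G'" "x = F e" using G'(3) by blast
      have "e \<in> E" using e(1) G'(1) by blast
      then show "x \<le> F u" using F_mono[of e u] PE u e by simp
    qed
    then show "\<exists>u\<in>F ` E. \<forall>x\<in>G. x \<le> u" using u(1) by blast
  qed
  then obtain M where M: "is_sup_in Zc (F ` E) M" using dZ unfolding dcpo_on_def by blast
  have MZ: "M \<in> Zc" using M unfolding is_sup_in_def by auto
  have ub: "T x0 \<le> M" if x0: "x0 \<in> X" "x0 \<le> y" for x0
  proof -
    have lc: "x0 \<in> lclosure (down E \<inter> down {x0})" using H[OF dE sE x0] .
    define S where "S = {z. z \<le> x0 \<and> T z \<le> M}"
    have "lower_set S" unfolding lower_set_def S_def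
    proof (intro allI impI, clarify)
      fix z w assume "z \<le> x0" "T z \<le> M" "w \<le> z"
      then show "w \<le> x0 \<and> T w \<le> M"
        using mcp_mono[OF mT, of w z] lowX[OF x0(1)] by (meson order_trans)
    qed
    moreover have "dsup_closed S" unfolding dsup_closed_def
    proof (intro allI impI, elim conjE)
      fix D s assume dD: "directed_in UNIV D" and DS: "D \<subseteq> S" and sD: "is_sup_in UNIV D s"
      have sx: "s \<le> x0" using sD DS unfolding is_sup_in_def S_def by auto
      have sX: "s \<in> X" using lowX[OF x0(1) sx] .
      have DX: "D \<subseteq> X" using DS lowX[OF x0(1)] unfolding S_def by auto
      have "directed_in X D" using dD DX unfolding directed_in_def by auto
      moreover have "is_sup_in X D s" using sD sX unfolding is_sup_in_def by auto
      ultimately have "is_sup_in Zc (T ` D) (T s)" using mT unfolding mcp_def by blast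
      moreover have "\<forall>d\<in>T ` D. d \<le> M" using DS unfolding S_def by auto
      ultimately have "T s \<le> M" using MZ unfolding is_sup_in_def by blast
      then show "s \<in> S" using sx unfolding S_def by auto
    qed
    moreover have "down E \<inter> down {x0} \<subseteq> S"
    proof
      fix z assume "z \<in> down E \<inter> down {x0}"
      then obtain e where e: "e \<in> E" "z \<le> e" "z \<le> x0" unfolding down_def by auto
      have zX: "z \<in> X" using lowX[OF x0(1) e(3)] .
      have "T z \<le> F e" using F_sup[of e] PE e zX unfolding is_sup_in_def by auto
      also have "F e \<le> M" using M e unfolding is_sup_in_def by auto
      finally show "z \<in> S" using e unfolding S_def by auto
    qed
    ultimately have "lclosure (down E \<inter> down {x0}) \<subseteq> S" by (rule lclosure_sub)
    then show ?thesis using lc unfolding S_def by auto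
  qed
  have least: "M \<le> u" if u: "u \<in> Zc" "\<forall>d\<in>T ` (X \<inter> {x. x \<le> y}). d \<le> u" for u
  proof -
    have "F e \<le> u" if e: "e \<in> E" for e
    proof -
      have "e \<le> y" using sE e unfolding is_sup_in_def by auto
      then have "\<forall>d\<in>T ` (X \<inter> {x. x \<le> e}). d \<le> u" using u(2) by (auto intro: order_trans)
      then show ?thesis using F_sup[of e] PE e u(1) unfolding is_sup_in_def by blast
    qed
    then show ?thesis using M u(1) unfolding is_sup_in_def by blast
  qed
  have "is_sup_in Zc (T ` (X \<inter> {x. x \<le> y})) M"
    unfolding is_sup_in_def using MZ ub least by blast
  then show ?thesis using M by blast
qed

lemma P_all: "P y"
proof -
  have "dsup_closed {y. P y}" unfolding dsup_closed_def
  proof (intro allI impI, elim conjE)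
    fix D s assume "directed_in UNIV D" "D \<subseteq> {y. P y}" "is_sup_in UNIV D s"
    then show "s \<in> {y. P y}" using step[of D s] unfolding P_def by auto
  qed
  moreover have "X \<subseteq> {y. P y}" using P_X unfolding P_def by blast
  ultimately have "dclosure X \<subseteq> {y. P y}" by (rule dclosure_sub)
  then show ?thesis using den unfolding dense_def by auto
qed

lemma F_mcp: "mcp UNIV Zc F"
  unfolding mcp_def
proof (intro conjI allI impI)
  show "F ` UNIV \<subseteq> Zc" using F_sup[OF P_all] unfolding is_sup_in_def by auto
  fix D :: "'a set" and s assume a: "directed_in UNIV D \<and> is_sup_in UNIV D s"
  then obtain M where M: "is_sup_in Zc (F ` D) M" "is_sup_in Zc (T ` (X \<inter> {x. x \<le> s})) M"
    using step[of D s] P_all by blast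
  have "M = F s" using sup_unique[OF M(2) F_sup[OF P_all]] .
  then show "is_sup_in Zc (F ` D) (F s)" using M(1) by simp
qed

lemma F_ext: "x \<in> X \<Longrightarrow> F x = T x"
  using sup_unique[OF F_sup[OF P_all] P_X] by simp

end

lemma uniq:
  assumes den: "dense X" and m1: "mcp (UNIV::'a::order set) Zc G1" and m2: "mcp UNIV Zc G2"
    and e: "\<forall>x\<in>X. G1 x = G2 x"
  shows "G1 y = G2 y"
proof -
  have "dsup_closed {y. G1 y = G2 y}" unfolding dsup_closed_def
  proof (intro allI impI, elim conjE)
    fix D s assume "directed_in UNIV D" "D \<subseteq> {y. G1 y = G2 y}" "is_sup_in UNIV D s"
    then have "is_sup_in Zc (G1 ` D) (G1 s)" "is_sup_in Zc (G2 ` D) (G2 s)" "G1 ` D = G2 ` D"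
      using m1 m2 unfolding mcp_def by (auto intro!: image_cong)
    then show "s \<in> {y. G1 y = G2 y}" using sup_unique by fastforce
  qed
  then have "dclosure X \<subseteq> {y. G1 y = G2 y}" using e by (intro dclosure_sub) auto
  then show ?thesis using den unfolding dense_def by auto
qed

lemma id_mcp:
  assumes dY: "dcpo_on (UNIV :: 'a::order set)" and low: "lower_set X"
  shows "mcp X (UNIV::'a set) id"
  unfolding mcp_def
proof (intro conjI allI impI)
  show "id ` X \<subseteq> UNIV" by auto
  fix D s assume a: "directed_in X D \<and> is_sup_in X D s"
  then have "directed_in UNIV D" unfolding directed_in_def by auto
  then obtain t where t: "is_sup_in UNIV D t" using dY unfolding dcpo_on_def by blast
  have sX: "s \<in> X" using a unfolding is_sup_in_def by auto
  have ts: "t \<le> s" using t a unfolding is_sup_in_def by auto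
  have "t \<in> X" using low sX ts unfolding lower_set_def by blast
  then have "s \<le> t" using t a unfolding is_sup_in_def by auto
  then have "s = t" using ts by auto
  then show "is_sup_in UNIV (id ` D) (id s)" using t by simp
qed

lemma general:
  fixes X :: "'a::order set"
  assumes dY: "dcpo_on (UNIV :: 'a set)" and low: "lower_set X" and den: "dense X"
    and H: "\<And>E y x0. directed_in UNIV E \<Longrightarrow> is_sup_in UNIV E y \<Longrightarrow> x0 \<in> X \<Longrightarrow> x0 \<le> y
             \<Longrightarrow> x0 \<in> lclosure (down E \<inter> down {x0})"
  shows "directed_completion X (UNIV :: 'a set) id TYPE('z::order)"
  unfolding directed_completion_def
proof (intro conjI allI impI)
  show "dcpo_on (UNIV :: 'a set)" by (rule dY)
  show "mcp X UNIV id" by (rule id_mcp[OF dY low])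
  fix Zc :: "'z set" and T assume a: "dcpo_on Zc \<and> mcp X Zc T"
  interpret c: ctx X Zc T
    apply unfold_locales
    using dY low den a H by simp_all
  show "\<exists>Tb. mcp UNIV Zc Tb \<and> (\<forall>x\<in>X. Tb (id x) = T x) \<and>
           (\<forall>Tb'. mcp UNIV Zc Tb' \<and> (\<forall>x\<in>X. Tb' (id x) = T x) \<longrightarrow> (\<forall>y\<in>UNIV. Tb' y = Tb y))"
  proof (intro exI[of _ c.F] conjI allI impI ballI)
    show "mcp UNIV Zc c.F" by (rule c.F_mcp)
    show "\<And>x. x \<in> X \<Longrightarrow> c.F (id x) = T x" using c.F_ext by simp
    fix Tb' y assume b: "mcp UNIV Zc Tb' \<and> (\<forall>x\<in>X. Tb' (id x) = T x)"
    show "Tb' y = c.F y"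
      using uniq[OF den _ c.F_mcp, of Tb'] b c.F_ext by simp
  qed
qed

lemma tip_dir:
  assumes "directed_in UNIV E" "is_sup_in UNIV E y"
  shows "is_tip E y"
proof -
  have ds: "dsup_closed {x. x \<le> y}" unfolding dsup_closed_def is_sup_in_def by auto
  have "E \<subseteq> {x. x \<le> y}" using assms(2) unfolding is_sup_in_def by auto
  then have sub: "dclosure E \<subseteq> {x. x \<le> y}" using ds dclosure_sub by blast
  have "y \<in> dclosure E" unfolding dclosure_def dsup_closed_def using assms by blast
  then show ?thesis using sub unfolding is_tip_def by auto
qed

theorem mainTheorem6:
  fixes X :: "'a::order set"
  assumes "dcpo_on (UNIV :: 'a set)"
    and "lower_set X"
    and "dense X"
  shows "((\<forall>a\<in>X. truncates a) \<longrightarrow> directed_completion X (UNIV :: 'a set) id TYPE('z::order))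
       \<and> (((\<forall>x\<in>X. \<forall>y\<in>X. \<exists>s. is_sup_in X {x, y} s) \<and> (\<forall>a\<in>X. directly_truncates a))
            \<longrightarrow> directed_completion X (UNIV :: 'a set) id TYPE('z::order))"
proof (intro conjI impI)
  assume t: "\<forall>a\<in>X. truncates a"
  show "directed_completion X (UNIV :: 'a set) id TYPE('z::order)"
  proof (rule general[OF assms])
    fix E y x0 assume a: "directed_in UNIV E" "is_sup_in UNIV E y" "x0 \<in> X" "x0 \<le> y"
    have tr: "truncates x0" using t a(3) by simp
    have tip: "is_tip E y" by (rule tip_dir[OF a(1,2)])
    show "x0 \<in> lclosure (down E \<inter> down {x0})"
      using tr tip a(4) unfolding truncates_def by blast
  qed
next
  assume t: "(\<forall>x\<in>X. \<forall>y\<in>X. \<exists>s. is_sup_in X {x, y} s) \<and> (\<forall>a\<in>X. directly_truncates a)"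
  show "directed_completion X (UNIV :: 'a set) id TYPE('z::order)"
  proof (rule general[OF assms])
    fix E y x0 assume a: "directed_in UNIV E" "is_sup_in UNIV E y" "x0 \<in> X" "x0 \<le> y"
    have tr: "directly_truncates x0" using t a(3) by simp
    show "x0 \<in> lclosure (down E \<inter> down {x0})"
      using tr a unfolding directly_truncates_def by blast
  qed
qed

end
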